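(* Let $n\ge2$, $s\in(0,1)$, $r>0$ and $s_1\in(0,2s)$. Then for all $x,y\in\mathbb{B}_r$ with $x\neq y$, $$G_{\mathbb{B}_r}(x,y)\le C_4(n,s)\,(d(x))^{s}\,\frac{(d(y))^{s-s_1}}{|x-y|^{\,n-s_1}},$$ where $C_4(n,s)=\pi^{-n/2}\Gamma(s)^{-1}\max\left\{\dfrac{2^{2s}\Gamma(\frac n2)}{\Gamma(1+s)},\ \Gamma\!\left(\tfrac n2-s\right)\right\}$.
   Context: $\mathbb{B}_r=\{x\in\mathbb{R}^n:|x|<r\}$, $d(x)=r-|x|$. The Green function of the fractional Laplacian $(-\Delta)^s$ on $\mathbb{B}_r$ (for $n\ge2$) is $$G_{\mathbb{B}_r}(x,y)=\kappa(n,s)\,|x-y|^{2s-n}\int_0^{r^*(x,y)}\frac{t^{s-1}}{(t+1)^{n/2}}\,dt,\qquad r^*(x,y)=\frac{(r^2-|x|^2)(r^2-|y|^2)}{r^2|x-y|^2},$$ with $\kappa(n,s)=\dfrac{\Gamma(\frac n2)}{2^{2s}\pi^{n/2}\Gamma(s)^2}$. *)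

theory Defs
  imports "HOL-Analysis.Analysis"
begin

text \<open>Dimension n is CARD('n); points of R^n are vectors of type real^'n.\<close>

definition kappa :: "nat \<Rightarrow> real \<Rightarrow> real" where
  "kappa n s = Gamma (real n / 2) / ((2::real) powr (2 * s) * pi powr (real n / 2) * (Gamma s)^2)"

definition rstar :: "real \<Rightarrow> real^'n \<Rightarrow> real^'n \<Rightarrow> real" where
  "rstar r x y = (r^2 - (norm x)^2) * (r^2 - (norm y)^2) / (r^2 * (norm (x - y))^2)"

text \<open>Green function of the fractional Laplacian on the ball of radius r.\<close>
definition green_ball :: "real \<Rightarrow> real \<Rightarrow> real^'n \<Rightarrow> real^'n \<Rightarrow> real" where
  "green_ball s r x y =
     kappa CARD('n) s * norm (x - y) powr (2 * s - real CARD('n)) *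
     (LBINT t=0..rstar r x y. t powr (s - 1) / (t + 1) powr (real CARD('n) / 2))"

definition C4 :: "nat \<Rightarrow> real \<Rightarrow> real" where
  "C4 n s = pi powr (- real n / 2) / Gamma s *
     max (2 powr (2 * s) * Gamma (real n / 2) / Gamma (1 + s)) (Gamma (real n / 2 - s))"

definition dist_bd :: "real \<Rightarrow> real^'n \<Rightarrow> real" where
  "dist_bd r x = r - norm x"

end

theory Submission
  imports Defs
begin


lemma pt_eq:
  fixes s m t :: real
  assumes "0 \<le> t"
  shows "(t/(1+t)) powr (s-1) * (1 - t/(1+t)) powr (m-s-1) * (1/(1+t)^2) = t powr (s-1) / (t+1) powr m"
proof (cases "t = 0")
  case True then show ?thesis by simp
next
  case False
  with assms have t: "t > 0" by simp
  have e1: "1 - t/(1+t) = 1/(1+t)" using t by (simp add: field_simps)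
  have e2: "(1/(1+t)^2) = 1 / (1+t) powr 2" using t by (simp add: powr_numeral)
  have "(t/(1+t)) powr (s-1) * (1 - t/(1+t)) powr (m-s-1) * (1/(1+t)^2)
     = t powr (s-1) / ((1+t) powr (s-1) * (1+t) powr (m-s-1) * (1+t) powr 2)"
    using t unfolding e1 e2 by (simp add: powr_divide)
  also have "(1+t) powr (s-1) * (1+t) powr (m-s-1) * (1+t) powr 2 = (1+t) powr m"
  proof -
    have "(1+t) powr ((s-1)+(m-s-1)+2) = (1+t) powr (s-1) * (1+t) powr (m-s-1) * (1+t) powr 2"
      by (simp only: powr_add)
    thus ?thesis by simp
  qed
  finally show ?thesis by (simp add: add.commute)
qed

lemma int_bounds:
  fixes s m R :: real
  assumes s: "0 < s" "s < m" and R: "0 \<le> R"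
  shows "(LBINT t=0..R. t powr (s-1) / (t+1) powr m) \<le> R powr s / s"
    and "(LBINT t=0..R. t powr (s-1) / (t+1) powr m) \<le> Beta s (m-s)"
proof -
  define F where "F u = u powr (s-1) * (1-u) powr (m-s-1)" for u :: real
  define g where "g t = t/(1+t)" for t :: real
  define g' where "g' t = 1/(1+t)^2" for t :: real
  define f where "f t = t powr (s-1) / (t+1) powr m" for t :: real
  have intF: "set_integrable lborel {0..1} F"
    unfolding F_def using integrable_Beta[of s "m-s"] s by simp
  have U: "g R \<le> 1" "0 \<le> g R" using R by (auto simp: g_def field_simps)
  have g0: "g 0 = 0" by (simp add: g_def)
  have intFU: "set_integrable lborel {g 0..g R} F"
    by (rule set_integrable_subset[OF intF]) (use U g0 in auto)
  have derivg: "(g has_real_derivative g' t) (at t)" if "t \<in> {0..R}" for t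
    using that unfolding g_def g'_def
    by (auto intro!: derivative_eq_intros simp: field_simps power2_eq_square)
  have contg': "continuous_on {0..R} g'"
    unfolding g'_def by (intro continuous_intros) auto
  have g'nn: "\<And>t. t \<in> {0..R} \<Longrightarrow> g' t \<ge> 0" by (simp add: g'_def)
  note sub = interval_integral_substitution[OF intFU derivg contg' g'nn R]
  have eq: "F (g t) * g' t = f t" if "t \<ge> 0" for t
    using pt_eq[OF that, of s m] by (simp add: F_def g_def g'_def f_def)
  have intf: "set_integrable lborel {0..R} f"
    using sub(1) by (subst set_integrable_cong[OF refl refl, of _ _ "\<lambda>t. F (g t) * g' t"]) (auto simp: eq)
  have I1: "(LBINT t=0..R. f t) = integral {0..R} f"
    using interval_integral_Icc[OF R, of f] set_borel_integral_eq_integral(2)[OF intf] by (simp add: zero_ereal_def)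
  have If: "f integrable_on {0..R}" using set_borel_integral_eq_integral(1)[OF intf] .
  have fnn: "\<And>t. 0 \<le> f t" by (simp add: f_def)
  have "integral {0..R} f \<le> integral {0..R} (\<lambda>t. t powr (s-1))"
  proof (rule integral_le[OF If])
    show "(\<lambda>t. t powr (s-1)) integrable_on {0..R}"
      by (rule integrable_on_powr_from_0) (use s R in auto)
    fix t :: real assume "t \<in> {0..R}"
    hence "1 \<le> (t+1) powr m" using s by (auto intro: ge_one_powr_ge_zero)
    hence "t powr (s-1) / (t+1) powr m \<le> t powr (s-1) / 1"
      by (intro divide_left_mono) auto
    thus "f t \<le> t powr (s-1)" unfolding f_def by simp
  qed
  also have "\<dots> = R powr s / s"
    using has_integral_powr_from_0[of "s-1" R] s R by (simp add: integral_unique)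
  finally show "(LBINT t=0..R. t powr (s-1) / (t+1) powr m) \<le> R powr s / s"
    using I1 by (simp add: f_def)
  have "(LBINT t=0..R. f t) = (LBINT t=0..R. F (g t) * g' t)"
  proof (rule interval_integral_cong)
    fix x assume "x \<in> einterval (min 0 (ereal R)) (max 0 (ereal R))"
    hence "x \<ge> 0" using R by (auto simp: einterval_iff min_def max_def zero_ereal_def split: if_splits)
    thus "f x = F (g x) * g' x" using eq by simp
  qed
  also have "\<dots> = (LBINT u=g 0..g R. F u)" using sub(2) by (simp add: zero_ereal_def)
  also have "\<dots> = integral {0..g R} F"
    using interval_integral_Icc[OF U(2), of F] set_borel_integral_eq_integral(2)[OF intFU] g0 by (simp add: zero_ereal_def)
  also have "\<dots> \<le> integral {0..1} F"
  proof (rule integral_subset_le)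
    show "{0..g R} \<subseteq> {0..1}" using U by auto
    show "F integrable_on {0..g R}" using set_borel_integral_eq_integral(1)[OF intFU] g0 by simp
    show "F integrable_on {0..1}" using set_borel_integral_eq_integral(1)[OF intF] .
    show "\<forall>x\<in>{0..1}. 0 \<le> F x" by (simp add: F_def)
  qed
  also have "\<dots> = Beta s (m-s)"
    using has_integral_Beta_real[of s "m-s"] s unfolding F_def by (simp add: integral_unique)
  finally show "(LBINT t=0..R. t powr (s-1) / (t+1) powr m) \<le> Beta s (m-s)"
    by (simp add: f_def)
qed


lemma core:
  fixes s s1 p q KI P A1 A2 :: real
  assumes s: "0 < s" "0 < s1" "s1 < 2 * s" and uv: "p > 0" "q > 0" "p \<ge> q - 1"
    and P: "P \<ge> 0" "A1 \<ge> 0" "A2 \<ge> 0"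
    and h1: "KI \<le> P*A1*(p*q) powr s / 4 powr s"
    and h2: "KI \<le> P*A2 / 4 powr s"
  shows "KI \<le> P * max A1 A2 * p powr s * q powr (s-s1)"
proof -
  have four: "(4::real) powr s = 2 powr (2 * s)"
    by (simp add: powr_powr[symmetric] powr_numeral[symmetric])
  have Q: "0 \<le> p powr s * q powr (s-s1)" by simp
  have PM: "P * A1 \<le> P * max A1 A2" "P * A2 \<le> P * max A1 A2"
    using P by (auto intro: mult_left_mono)
  show ?thesis
  proof (cases "q \<le> 2")
    case True
    have "q powr s1 \<le> 2 powr s1" using True uv s by (intro powr_mono2) auto
    also have "\<dots> \<le> 2 powr (2 * s)" using s by (intro powr_mono) auto
    finally have vs1: "q powr s1 / 4 powr s \<le> 1" by (simp add: four)
    have "(p*q) powr s / 4 powr s = (p powr s * q powr (s-s1)) * (q powr s1 / 4 powr s)"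
      using uv by (simp add: powr_mult powr_diff field_simps)
    also have "\<dots> \<le> p powr s * q powr (s-s1)"
      using vs1 Q by (intro mult_left_le) auto
    finally have "(p*q) powr s / 4 powr s \<le> p powr s * q powr (s-s1)" .
    hence "P*A1*((p*q) powr s / 4 powr s) \<le> P*A1*(p powr s * q powr (s-s1))"
      using P by (intro mult_left_mono) auto
    also have "\<dots> \<le> P * max A1 A2 * (p powr s * q powr (s-s1))"
      using PM Q by (intro mult_right_mono) auto
    finally show ?thesis using h1 by (simp add: mult.assoc)
  next
    case False
    hence uge: "p \<ge> q/2" using uv by simp
    have "(q/2) powr s \<le> p powr s" using uge uv s by (intro powr_mono2) auto
    hence "q powr s / 2 powr s \<le> p powr s" using uv by (simp add: powr_divide)
    hence "q powr s * q powr (s-s1) / 2 powr s \<le> p powr s * q powr (s-s1)"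
      by (simp add: divide_le_eq mult_right_mono mult.commute[of _ "2 powr s"] mult.assoc[symmetric])
    moreover have "q powr s * q powr (s-s1) = q powr (2 * s - s1)"
      using uv by (simp add: powr_add[symmetric])
    moreover have "1 \<le> q powr (2 * s - s1)" using False s by (intro ge_one_powr_ge_zero) auto
    ultimately have a: "1 / 2 powr s \<le> p powr s * q powr (s-s1)"
      by (smt (verit) divide_right_mono powr_ge_zero)
    have "1 / 4 powr s \<le> 1 / 2 powr s" using s by (intro divide_left_mono powr_mono2) auto
    with a have b: "1 / 4 powr s \<le> p powr s * q powr (s-s1)" by linarith
    have "P*A2 / 4 powr s = P*A2 * (1/ 4 powr s)" by simp
    also have "\<dots> \<le> P*A2 * (p powr s * q powr (s-s1))"
      using b P by (intro mult_left_mono) auto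
    also have "\<dots> \<le> P * max A1 A2 * (p powr s * q powr (s-s1))"
      using PM Q by (intro mult_right_mono) auto
    finally show ?thesis using h2 by (simp add: mult.assoc)
  qed
qed

lemma alg1:
  fixes X Y G s Gm :: real
  assumes "X > 0" "Y > 0" "G > 0" "s > 0"
  shows "Gm / (X * Y * G^2) * (X / s) = 1 / Y / G * (X * Gm / (s * G)) / X"
  using assms by (simp add: field_simps power2_eq_square)

lemma alg2:
  fixes X Y G Gm Gms :: real
  assumes "X > 0" "Y > 0" "G > 0" "Gm > 0"
  shows "Gm / (X * Y * G^2) * (G * Gms / Gm) = 1 / Y / G * Gms / X"
  using assms by (simp add: field_simps power2_eq_square)

theorem lemma4p3:
  fixes x y :: "real^'n" and s r s1 :: real
  assumes "CARD('n) \<ge> 2"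
    and "0 < s" "s < 1" "0 < r" "0 < s1" "s1 < 2 * s"
    and "x \<in> ball 0 r" "y \<in> ball 0 r" "x \<noteq> y"
  shows "green_ball s r x y \<le>
    C4 CARD('n) s * dist_bd r x powr s * dist_bd r y powr (s - s1)
      / norm (x - y) powr (real CARD('n) - s1)"
proof -
  define n where "n = real CARD('n)"
  define m where "m = n / 2"
  have n2: "n \<ge> 2" using assms(1) unfolding n_def by simp
  have sm: "s < m" using n2 assms(3) unfolding m_def by simp
  have s0: "0 < s" using assms(2) .
  define \<rho> where "\<rho> = norm (x - y)"
  define a where "a = r - norm x"
  define b where "b = r - norm y"
  have rho: "\<rho> > 0" using assms(9) unfolding \<rho>_def by simp
  have xr: "norm x < r" and yr: "norm y < r" using assms(7,8) by auto
  have a0: "a > 0" and b0: "b > 0" using xr yr unfolding a_def b_def by auto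
  define R where "R = rstar r x y"
  have Rnn: "R \<ge> 0"
  proof -
    have "r^2 - (norm x)^2 \<ge> 0" using xr norm_ge_zero[of x]
      by (smt (verit) power_mono)
    moreover have "r^2 - (norm y)^2 \<ge> 0" using yr norm_ge_zero[of y]
      by (smt (verit) power_mono)
    ultimately show ?thesis unfolding R_def rstar_def by simp
  qed
  define p where "p = a / \<rho>"
  define q where "q = b / \<rho>"
  have p0: "p > 0" and q0: "q > 0" using a0 b0 rho unfolding p_def q_def by auto
  have pq: "p \<ge> q - 1"
  proof -
    have "norm x \<le> norm y + \<rho>" unfolding \<rho>_def
      by (metis add.commute diff_add_cancel norm_triangle_ineq)
    hence "a \<ge> b - \<rho>" unfolding a_def b_def by simp
    hence "a / \<rho> \<ge> (b - \<rho>) / \<rho>" using rho by (intro divide_right_mono) auto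
    thus ?thesis using rho unfolding p_def q_def by (simp add: diff_divide_distrib)
  qed
  have RB: "R \<le> 4 * (p * q)"
  proof -
    have fx: "r^2 - (norm x)^2 = a * (r + norm x)" unfolding a_def by (simp add: power2_eq_square algebra_simps)
    have ex: "r^2 - (norm x)^2 \<le> 2 * r * a" "0 \<le> r^2 - (norm x)^2"
      unfolding fx proof -
      have "0 \<le> norm x" by simp
      hence g1: "0 \<le> r + norm x" "r + norm x \<le> 2 * r" using xr by linarith+
      show "a * (r + norm x) \<le> 2 * r * a" using mult_left_mono[OF g1(2), of a] a0 by (simp add: mult.commute)
      show "0 \<le> a * (r + norm x)" using g1(1) a0 by simp
    qed
    have fy: "r^2 - (norm y)^2 = b * (r + norm y)" unfolding b_def by (simp add: power2_eq_square algebra_simps)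
    have ey: "r^2 - (norm y)^2 \<le> 2 * r * b" "0 \<le> r^2 - (norm y)^2"
      unfolding fy proof -
      have "0 \<le> norm y" by simp
      hence g1: "0 \<le> r + norm y" "r + norm y \<le> 2 * r" using yr by linarith+
      show "b * (r + norm y) \<le> 2 * r * b" using mult_left_mono[OF g1(2), of b] b0 by (simp add: mult.commute)
      show "0 \<le> b * (r + norm y)" using g1(1) b0 by simp
    qed
    have "(r^2 - (norm x)^2) * (r^2 - (norm y)^2) \<le> (2 * r * a) * (2 * r * b)"
      using ex ey a0 assms(4) by (intro mult_mono) auto
    hence "R \<le> (2 * r * a) * (2 * r * b) / (r^2 * \<rho>^2)"
      unfolding R_def rstar_def \<rho>_def[symmetric] using rho assms(4)
      by (intro divide_right_mono) auto
    also have "\<dots> = 4 * (p * q)" using rho assms(4) unfolding p_def q_def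
      by (simp add: field_simps power2_eq_square)
    finally show ?thesis .
  qed
  define I where "I = (LBINT t=0..R. t powr (s - 1) / (t + 1) powr m)"
  define \<kappa> where "\<kappa> = kappa CARD('n) s"
  define P where "P = pi powr (- n / 2) / Gamma s"
  define A1 where "A1 = 2 powr (2 * s) * Gamma m / Gamma (1 + s)"
  define A2 where "A2 = Gamma (m - s)"
  have gs: "Gamma s > 0" using s0 by (rule Gamma_real_pos)
  have gm: "Gamma m > 0" using sm s0 by (intro Gamma_real_pos) auto
  have gms: "Gamma (m - s) > 0" using sm by (intro Gamma_real_pos) auto
  have gs1: "Gamma (1 + s) = s * Gamma s" proof -
    have "s \<notin> \<int>\<^sub>\<le>\<^sub>0" using s0 nonpos_Ints_nonpos[of s] by linarith
    from Gamma_plus1[OF this] show ?thesis by (simp add: add.commute)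
  qed
  have four: "(4::real) powr s = 2 powr (2 * s)"
    by (simp add: powr_powr[symmetric] powr_numeral[symmetric])
  have kap: "\<kappa> = Gamma m / (2 powr (2 * s) * pi powr m * (Gamma s)^2)"
    unfolding \<kappa>_def kappa_def m_def n_def ..
  have k0: "\<kappa> > 0" unfolding kap using gm gs by simp
  have g1s: "Gamma (1 + s) > 0" using s0 by (intro Gamma_real_pos) auto
  have P0: "P \<ge> 0" "A1 \<ge> 0" "A2 \<ge> 0" unfolding P_def A1_def A2_def
    using gs gm gms g1s by (simp_all add: less_imp_le)
  have pim: "pi powr (- n / 2) = 1 / pi powr m"
  proof -
    have "- n / 2 = - m" by (simp add: m_def)
    thus ?thesis by (simp only: powr_minus_divide)
  qed
  have X0: "(2::real) powr (2 * s) > 0" by simp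
  have Y0: "pi powr m > 0" by simp
  have id1: "\<kappa> * (4 powr s / s) = P * A1 / 4 powr s"
    unfolding kap P_def A1_def pim gs1 four
    using alg1[OF X0 Y0 gs s0, of "Gamma m"] .
  have id2: "\<kappa> * Beta s (m - s) = P * A2 / 4 powr s"
    unfolding kap P_def A2_def pim four Beta_def
    using alg2[OF X0 Y0 gs gm, of "Gamma (m - s)"] by simp
  have h1: "\<kappa> * I \<le> P*A1*(p*q) powr s / 4 powr s"
  proof -
    have "I \<le> R powr s / s" unfolding I_def by (rule int_bounds(1)[OF s0 sm Rnn])
    also have "\<dots> \<le> (4 * (p * q)) powr s / s" using RB Rnn s0 by (intro divide_right_mono powr_mono2) auto
    also have "\<dots> = (4 powr s / s) * (p*q) powr s" using p0 q0 by (simp add: powr_mult)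
    finally have "\<kappa> * I \<le> \<kappa> * ((4 powr s / s) * (p*q) powr s)" using k0 by (intro mult_left_mono) auto
    also have "\<dots> = (\<kappa> * (4 powr s / s)) * (p*q) powr s" by (simp only: mult.assoc)
    also have "\<dots> = P*A1*(p*q) powr s / 4 powr s" unfolding id1 by simp
    finally show ?thesis .
  qed
  have h2: "\<kappa> * I \<le> P*A2 / 4 powr s"
  proof -
    have "I \<le> Beta s (m - s)" unfolding I_def by (rule int_bounds(2)[OF s0 sm Rnn])
    hence "\<kappa> * I \<le> \<kappa> * Beta s (m - s)" using k0 by (intro mult_left_mono) auto
    thus ?thesis using id2 by simp
  qed
  have main: "\<kappa> * I \<le> P * max A1 A2 * p powr s * q powr (s-s1)"
    by (rule core[OF s0 assms(5,6) p0 q0 pq P0 h1 h2])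
  have C4eq: "C4 CARD('n) s = P * max A1 A2"
    unfolding C4_def P_def A1_def A2_def m_def n_def ..
  have G: "green_ball s r x y = \<rho> powr (2 * s - n) * (\<kappa> * I)"
    unfolding green_ball_def I_def \<kappa>_def \<rho>_def R_def m_def n_def by simp
  also have "\<dots> \<le> \<rho> powr (2 * s - n) * (P * max A1 A2 * p powr s * q powr (s-s1))"
    using main by (intro mult_left_mono) auto
  also have "\<dots> = P * max A1 A2 * a powr s * b powr (s - s1) / \<rho> powr (n - s1)"
  proof -
    have "\<rho> powr (2 * s - n) * (p powr s * q powr (s-s1)) = a powr s * b powr (s - s1) / \<rho> powr (n - s1)"
    proof -
      have e1: "p powr s * q powr (s-s1) = a powr s * b powr (s - s1) / (\<rho> powr s * \<rho> powr (s - s1))"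
        unfolding p_def q_def using a0 b0 rho by (simp add: powr_divide)
      have e2: "\<rho> powr (2 * s - n) / (\<rho> powr s * \<rho> powr (s - s1)) = 1 / \<rho> powr (n - s1)"
      proof -
        have "\<rho> powr (2 * s - n) * \<rho> powr (n - s1) = \<rho> powr s * \<rho> powr (s - s1)"
          by (simp add: powr_add[symmetric])
        thus ?thesis using rho by (simp add: field_simps)
      qed
      have "\<rho> powr (2 * s - n) * (p powr s * q powr (s-s1))
          = (a powr s * b powr (s - s1)) * (\<rho> powr (2 * s - n) / (\<rho> powr s * \<rho> powr (s - s1)))"
        unfolding e1 by simp
      also have "\<dots> = a powr s * b powr (s - s1) / \<rho> powr (n - s1)" unfolding e2 by simp
      finally show ?thesis .
    qed
    thus ?thesis by (simp add: mult.assoc mult.left_commute)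
  qed
  finally show ?thesis unfolding C4eq a_def[symmetric] dist_bd_def b_def[symmetric] \<rho>_def[symmetric] n_def[symmetric] .
qed
end
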